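(* Let $q\in\mathbb{N}$, $q>1$. For $P\ge2$, $N\ge1$ and integers $n>2$ let \[ \Delta_{P,N}^{(2,3)}(n)=\sum_{\substack{d,v\ge1:\ dv^2=n^2-4\\ p\mid v\Rightarrow p\le P}}\frac1v\sum_{\substack{l\ge1:\\ p\mid l\Rightarrow p\le P}}\frac{\chi_d(l)}{l}\big(e^{-l/N}-1\big), \] where $p$ denotes primes. Then for $P\ge2$ and $x,N\ge1$, \[ \Big(\frac1x\sum_{2<n\le x}\big|\Delta_{P,N}^{(2,3)}(n)\big|^{2q}\Big)^{1/(2q)}\ll N^{-1/2}+\sum_{\substack{l>\sqrt N:\\ p\mid l\Rightarrow p\le P}}\frac1l . \]
   Context: Sums over $d$ run over positive non-square discriminants, i.e. positive integers $d$, not perfect squares, with $d\equiv0,1\pmod4$; $v$ runs over positive integers. For such $d$, $\chi_d:\mathbb{Z}\to\{0,\pm1\}$ is the completely multiplicative function with: for odd primes $p$, $\chi_d(p)=0$ if $p\mid d$, $1$ if $p\nmid d$ and $x^2\equiv d\pmod p$ is solvable, $-1$ if insolvable; $\chi_d(2)=1,-1,0$ according as $d\equiv1\pmod 8$, $d\equiv5\pmod8$, $d\equiv0\pmod4$; $\chi_d(-1)=1$. *)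

theory Defs
  imports "HOL-Analysis.Analysis" "HOL-Number_Theory.Number_Theory"
begin

definition is_disc :: "int \<Rightarrow> bool" where
  "is_disc d \<longleftrightarrow> d > 0 \<and> \<not> (\<exists>m::int. d = m^2) \<and> (d mod 4 = 0 \<or> d mod 4 = 1)"

definition chi_prime :: "int \<Rightarrow> nat \<Rightarrow> int" where
  "chi_prime d p =
     (if p = 2 then (if d mod 8 = 1 then 1 else if d mod 8 = 5 then -1 else 0)
      else if int p dvd d then 0
      else if QuadRes (int p) d then 1 else -1)"

definition chi :: "int \<Rightarrow> nat \<Rightarrow> int" where
  "chi d l = (if l = 0 then 0 else
     (\<Prod>p\<in>prime_factors l. chi_prime d p ^ multiplicity p l))"

definition smooth :: "real \<Rightarrow> nat \<Rightarrow> bool" where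
  "smooth P l \<longleftrightarrow> (\<forall>p::nat. prime p \<longrightarrow> p dvd l \<longrightarrow> real p \<le> P)"

definition Delta23 :: "real \<Rightarrow> real \<Rightarrow> nat \<Rightarrow> real" where
  "Delta23 P N n =
     (\<Sum>v\<in>{v::nat. 0 < v \<and> int (v^2) dvd (int n^2 - 4) \<and> smooth P v
                    \<and> is_disc ((int n^2 - 4) div int (v^2))}.
        (1 / real v) *
        infsum (\<lambda>l::nat. real_of_int (chi ((int n^2 - 4) div int (v^2)) l) / real l
                          * (exp (- real l / N) - 1))
               {l. 0 < l \<and> smooth P l})"

end

theory Submission
  imports Defs "HOL-Analysis.Summation_Tests"
begin


lemma dvd_gcd_prod_nat:
  fixes u x y :: nat
  assumes "u dvd x * y"
  shows "u dvd gcd u x * gcd u y"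
proof -
  have e1: "gcd u x * gcd u y = gcd (u * gcd u y) (x * gcd u y)"
    using gcd_mult_distrib_nat[of "gcd u y" u x] by (simp add: mult.commute)
  have e2: "x * gcd u y = gcd (x * u) (x * y)" by (simp add: gcd_mult_distrib_nat)
  have "u dvd x * gcd u y" unfolding e2 using assms by simp
  hence "u dvd gcd (u * gcd u y) (x * gcd u y)" by simp
  thus ?thesis using e1 by simp
qed

lemma sq_ideal:
  fixes d :: nat
  assumes "d > 0"
  shows "\<exists>r>0. d \<le> r^2 \<and> (\<forall>v. d dvd v^2 \<longrightarrow> r dvd v)"
proof -
  define r where "r = (LEAST r. 0 < r \<and> d dvd r^2)"
  have ex: "0 < d \<and> d dvd d^2" using assms by (simp add: power2_eq_square)
  have r: "0 < r \<and> d dvd r^2" unfolding r_def by (rule LeastI[of _ d], rule ex)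
  have rmin: "r \<le> g" if "0 < g" "d dvd g^2" for g
    unfolding r_def by (rule Least_le) (use that in simp)
  have "d \<le> r^2" using r by (simp add: dvd_imp_le)
  moreover have "r dvd v" if "d dvd v^2" for v
  proof (cases "v = 0")
    case True then show ?thesis by simp
  next
    case False
    define g where "g = gcd v r"
    have g0: "0 < g" using False g_def by simp
    have "d dvd gcd (v^2) (r^2)" by (rule gcd_greatest) (use that r in auto)
    hence "d dvd g^2" by (simp add: g_def)
    hence "r \<le> g" using rmin g0 by simp
    moreover have "g \<le> r" using r g_def by (simp add: dvd_imp_le)
    ultimately have "g = r" by simp
    thus ?thesis unfolding g_def by (metis gcd_dvd1)
  qed
  ultimately show ?thesis using r by blast
qed

lemma W_cond:
  fixes n v :: nat
  assumes "n > 2"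
  shows "int (v^2) dvd (int n^2 - 4) \<longleftrightarrow> v^2 dvd (n-2)*(n+2)"
proof -
  have "int ((n-2)*(n+2)) = (int n - 2) * (int n + 2)" proof -
    have "int (n-2) = int n - 2" using assms by simp
    thus ?thesis by (simp only: of_nat_mult) simp
  qed
  also have "\<dots> = int n^2 - 4" by (simp add: power2_eq_square algebra_simps)
  finally have "int n^2 - 4 = int ((n-2)*(n+2))" by simp
  thus ?thesis by (simp only: int_dvd_int_iff)
qed

lemma gcd_trick:
  fixes n v :: nat
  assumes "n > 2" "v > 0" "v^2 dvd (n-2)*(n+2)"
  shows "\<exists>d. v \<le> d \<and> d dvd v^2 \<and> (d dvd n-2 \<or> d dvd n+2)"
proof -
  define a where "a = gcd (v^2) (n-2)"
  define b where "b = gcd (v^2) (n+2)"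
  have "v^2 dvd a*b" unfolding a_def b_def by (rule dvd_gcd_prod_nat[OF assms(3)])
  moreover have "a > 0" "b > 0" using assms a_def b_def by auto
  ultimately have le: "v^2 \<le> a*b" by (simp add: dvd_imp_le)
  have "v \<le> a \<or> v \<le> b"
  proof (rule ccontr)
    assume "\<not> (v \<le> a \<or> v \<le> b)"
    hence "a < v" "b < v" by auto
    hence "a * b < v * v" by (simp add: mult_strict_mono)
    thus False using le by (simp add: power2_eq_square)
  qed
  thus ?thesis unfolding a_def b_def by (metis gcd_dvd1 gcd_dvd2)
qed



lemma smooth_summable:
  "(\<lambda>l::nat. 1 / real l) summable_on {l. 0 < l \<and> smooth P l}"
proof -
  define Q where "Q = {p::nat. prime p \<and> real p \<le> P}"
  have "Q \<subseteq> {..nat \<lceil>P\<rceil>}" unfolding Q_def by (auto simp: le_nat_iff) linarith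
  hence finQ: "finite Q" by (rule finite_subset) simp
  define \<phi> where "\<phi> g = (\<Prod>p\<in>Q. p ^ g p)" for g :: "nat \<Rightarrow> nat"
  define B where "B = PiE Q (\<lambda>_. UNIV :: nat set)"
  have mult: "multiplicity p (\<phi> g) = g p" if "p \<in> Q" for p g
    unfolding \<phi>_def using that finQ by (subst multiplicity_prod_prime_powers) (auto simp: Q_def)
  have inj: "inj_on \<phi> B"
  proof (rule inj_onI)
    fix g h assume g: "g \<in> B" and h: "h \<in> B" and e: "\<phi> g = \<phi> h"
    show "g = h"
      using g h unfolding B_def
      by (rule PiE_ext) (metis mult e)
  qed
  have sub: "{l. 0 < l \<and> smooth P l} \<subseteq> \<phi> ` B"
  proof
    fix l assume "l \<in> {l. 0 < l \<and> smooth P l}"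
    hence l: "0 < l" "smooth P l" by auto
    define g where "g = restrict (\<lambda>p. multiplicity p l) Q"
    have gB: "g \<in> B" unfolding g_def B_def by simp
    have pf: "prime_factors l \<subseteq> Q"
      using l unfolding Q_def smooth_def by (auto simp: in_prime_factors_iff)
    have "\<phi> g = (\<Prod>p\<in>Q. p ^ multiplicity p l)" unfolding \<phi>_def g_def by simp
    also have "\<dots> = (\<Prod>p\<in>prime_factors l. p ^ multiplicity p l)"
    proof (rule prod.mono_neutral_right[OF finQ pf], rule ballI)
      fix p assume "p \<in> Q - prime_factors l"
      hence "\<not> p dvd l" using l Q_def by (auto simp: in_prime_factors_iff)
      thus "p ^ multiplicity p l = 1" by (simp add: not_dvd_imp_multiplicity_0)
    qed
    also have "\<dots> = l" using l by (simp add: prod_prime_factors)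
    finally show "l \<in> \<phi> ` B" using gB by (metis image_eqI)
  qed
  have geo: "Infinite_Sum.abs_summable_on (\<lambda>e. (1 / real p) ^ e) UNIV" if "p \<in> Q" for p
  proof -
    have "p \<ge> 2" using that Q_def prime_ge_2_nat by auto
    hence "summable (\<lambda>e. (1 / real p) ^ e)" by (intro summable_geometric) auto
    hence "(\<lambda>e. (1 / real p) ^ e) summable_on UNIV"
      by (subst summable_on_UNIV_nonneg_real_iff) auto
    thus ?thesis using summable_on_iff_abs_summable_on_real by blast
  qed
  have "Infinite_Set_Sum.abs_summable_on (\<lambda>g. \<Prod>p\<in>Q. (1 / real p) ^ g p) B"
    unfolding B_def
    by (rule abs_summable_on_prod_PiE[OF finQ], simp, rule abs_summable_equivalent[THEN iffD1, OF geo])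
  hence "Infinite_Sum.abs_summable_on (\<lambda>g. \<Prod>p\<in>Q. (1 / real p) ^ g p) B"
    by (rule abs_summable_equivalent[THEN iffD2])
  hence s1: "(\<lambda>g. \<Prod>p\<in>Q. (1 / real p) ^ g p) summable_on B"
    using summable_on_iff_abs_summable_on_real by blast
  have "((\<lambda>l::nat. 1 / real l) \<circ> \<phi>) summable_on B"
  proof (rule summable_on_cong[THEN iffD1, OF _ s1])
    fix g assume "g \<in> B"
    show "(\<Prod>p\<in>Q. (1 / real p) ^ g p) = ((\<lambda>l::nat. 1 / real l) \<circ> \<phi>) g"
      unfolding \<phi>_def by (simp add: power_one_over prod_dividef)
  qed
  hence "(\<lambda>l::nat. 1 / real l) summable_on \<phi> ` B"
    using summable_on_reindex[OF inj] by blast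
  thus ?thesis using sub summable_on_subset_banach by blast
qed

lemma abs_chi_le: "\<bar>chi d l\<bar> \<le> 1"
proof -
  have cp: "\<bar>chi_prime d p\<bar> \<le> 1" for p unfolding chi_prime_def by auto
  show ?thesis unfolding chi_def
    by (auto simp: abs_prod power_abs intro!: prod_le_1 power_le_one cp)
qed



lemma g_abs_le:
  fixes N :: real and l :: nat
  assumes "N \<ge> 1" "l > 0"
  shows "\<bar>real_of_int (chi d l) / real l * (exp (- real l / N) - 1)\<bar> \<le> 1 / real l"
    and "\<bar>real_of_int (chi d l) / real l * (exp (- real l / N) - 1)\<bar> \<le> 1 / N"
proof -
  have c: "\<bar>real_of_int (chi d l)\<bar> \<le> 1" using abs_chi_le[of d l] by linarith
  have e1: "exp (- real l / N) \<le> 1" using assms by simp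
  have e2: "1 - real l / N \<le> exp (- real l / N)" using exp_ge_add_one_self[of "- real l / N"] by simp
  have a: "\<bar>exp (- real l / N) - 1\<bar> \<le> 1" using e1 by simp
  have b: "\<bar>exp (- real l / N) - 1\<bar> \<le> real l / N" using e1 e2 by simp
  have "\<bar>real_of_int (chi d l) / real l * (exp (- real l / N) - 1)\<bar>
      = \<bar>real_of_int (chi d l)\<bar> * (\<bar>exp (- real l / N) - 1\<bar> / real l)"
    by (simp add: abs_mult)
  also have "\<dots> \<le> 1 * (\<bar>exp (- real l / N) - 1\<bar> / real l)"
    by (rule mult_right_mono[OF c]) simp
  finally have m: "\<bar>real_of_int (chi d l) / real l * (exp (- real l / N) - 1)\<bar> \<le> \<bar>exp (- real l / N) - 1\<bar> / real l" by simp
  show "\<bar>real_of_int (chi d l) / real l * (exp (- real l / N) - 1)\<bar> \<le> 1 / real l"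
    using m a assms by (smt (verit) divide_right_mono of_nat_0_le_iff)
  have "\<bar>exp (- real l / N) - 1\<bar> / real l \<le> (real l / N) / real l"
    by (rule divide_right_mono[OF b]) simp
  also have "\<dots> = 1 / N" using assms by simp
  finally show "\<bar>real_of_int (chi d l) / real l * (exp (- real l / N) - 1)\<bar> \<le> 1 / N" using m by linarith
qed

lemma inner_bound:
  fixes N :: real
  assumes N: "N \<ge> 1"
  shows "\<bar>infsum (\<lambda>l::nat. real_of_int (chi d l) / real l * (exp (- real l / N) - 1))
            {l. 0 < l \<and> smooth P l}\<bar>
         \<le> N powr (-1/2) + infsum (\<lambda>l::nat. 1 / real l) {l. real l > sqrt N \<and> smooth P l}"
proof -
  define g where "g l = real_of_int (chi d l) / real l * (exp (- real l / N) - 1)" for l :: nat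
  define S where "S = {l::nat. 0 < l \<and> smooth P l}"
  define S1 where "S1 = {l \<in> S. real l \<le> sqrt N}"
  define S2 where "S2 = {l::nat. real l > sqrt N \<and> smooth P l}"
  have sqN: "sqrt N \<ge> 1" using N by simp
  have pos: "0 < x" if "sqrt N < real x" for x :: nat proof -
    have "real x > 0" using that sqN by linarith
    thus ?thesis by simp
  qed
  have SU: "S = S1 \<union> S2" unfolding S_def S1_def S2_def using pos by auto
  have disj: "S1 \<inter> S2 = {}" unfolding S1_def S2_def by auto
  have S2S: "S2 \<subseteq> S" using SU by auto
  have sumS: "(\<lambda>l::nat. 1 / real l) summable_on S" unfolding S_def by (rule smooth_summable)
  have sumS2: "(\<lambda>l::nat. 1 / real l) summable_on S2" using summable_on_subset_banach[OF sumS S2S] .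
  have absS2: "(\<lambda>l. \<bar>g l\<bar>) summable_on S2"
    by (rule summable_on_comparison_test[OF sumS2]) (use S2S pos g_abs_le[OF N] in \<open>auto simp: g_def S_def\<close>)
  hence gS2: "g summable_on S2" using summable_on_iff_abs_summable_on_real by auto
  have "S1 \<subseteq> {..nat \<lfloor>sqrt N\<rfloor>}" unfolding S1_def by (auto simp: le_nat_floor)
  hence finS1: "finite S1" by (rule finite_subset) simp
  have "infsum g S = infsum g S1 + infsum g S2"
    unfolding SU by (rule infsum_Un_disjoint[OF _ gS2 disj]) (simp add: finS1)
  also have "infsum g S1 = sum g S1" using finS1 by simp
  finally have eq: "infsum g S = sum g S1 + infsum g S2" .
  have "card S1 \<le> card {1..nat \<lfloor>sqrt N\<rfloor>}"
    by (rule card_mono) (auto simp: S1_def S_def le_nat_floor)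
  hence "card S1 \<le> nat \<lfloor>sqrt N\<rfloor>" by simp
  hence "real (card S1) \<le> real (nat \<lfloor>sqrt N\<rfloor>)" by linarith
  also have "\<dots> \<le> sqrt N" using sqN by linarith
  finally have cS1: "real (card S1) \<le> sqrt N" .
  have "\<bar>sum g S1\<bar> \<le> (\<Sum>l\<in>S1. 1 / N)"
    by (rule order_trans[OF sum_abs sum_mono]) (use g_abs_le(2)[OF N] in \<open>auto simp: g_def S1_def S_def\<close>)
  also have "\<dots> = card S1 / N" by simp
  also have "card S1 / N \<le> sqrt N / N" using N cS1 by (simp add: divide_right_mono)
  also have "sqrt N / N = N powr (-1/2)"
  proof -
    have "N powr (-1/2) = N powr (1/2 - 1)" by simp
    also have "\<dots> = N powr (1/2) / N powr 1" by (rule powr_diff)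
    also have "\<dots> = sqrt N / N" using N by (simp add: powr_half_sqrt)
    finally show ?thesis by simp
  qed
  finally have b1: "\<bar>sum g S1\<bar> \<le> N powr (-1/2)" .
  have "\<bar>infsum g S2\<bar> \<le> infsum (\<lambda>l. \<bar>g l\<bar>) S2"
    using norm_infsum_bound[of g S2] absS2 by simp
  also have "\<dots> \<le> infsum (\<lambda>l::nat. 1 / real l) S2"
    by (rule infsum_mono[OF absS2 sumS2]) (use S2S pos g_abs_le[OF N] in \<open>auto simp: g_def S_def\<close>)
  finally have b2: "\<bar>infsum g S2\<bar> \<le> infsum (\<lambda>l::nat. 1 / real l) S2" .
  have "\<bar>infsum g S\<bar> \<le> N powr (-1/2) + infsum (\<lambda>l::nat. 1 / real l) S2"
    unfolding eq using b1 b2 by linarith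
  thus ?thesis unfolding g_def S_def S2_def .
qed



lemma jensen_pow:
  fixes w a :: "'a \<Rightarrow> real"
  assumes fin: "finite W" and w0: "\<And>v. v \<in> W \<Longrightarrow> 0 \<le> w v" and a0: "\<And>v. v \<in> W \<Longrightarrow> 0 \<le> a v"
    and w1: "sum w W \<le> 1" and k: "even k" "k \<ge> 1"
  shows "(\<Sum>v\<in>W. w v * a v) ^ k \<le> (\<Sum>v\<in>W. w v * a v ^ k)"
proof (cases "sum w W = 0")
  case True
  hence "\<forall>v\<in>W. w v = 0" using sum_nonneg_eq_0_iff[OF fin] w0 by blast
  thus ?thesis using k by (simp add: zero_power)
next
  case False
  define c where "c = sum w W"
  have c0: "c > 0" using False w0 c_def by (simp add: order_less_le sum_nonneg)
  have ne: "W \<noteq> {}" using False by auto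
  have sw: "(\<Sum>v\<in>W. w v / c) = 1" using c0 by (simp add: c_def sum_divide_distrib[symmetric])
  have "(\<Sum>v\<in>W. (w v / c) *\<^sub>R a v) ^ k \<le> (\<Sum>v\<in>W. (w v / c) * a v ^ k)"
    by (rule convex_on_sum[OF fin ne convex_power_even[OF k(1)] sw]) (use c0 w0 in auto)
  hence "((\<Sum>v\<in>W. w v * a v) / c) ^ k \<le> (\<Sum>v\<in>W. w v * a v ^ k) / c"
    by (simp add: sum_divide_distrib)
  hence "(\<Sum>v\<in>W. w v * a v) ^ k / c ^ k \<le> (\<Sum>v\<in>W. w v * a v ^ k) / c"
    by (simp add: power_divide)
  hence "(\<Sum>v\<in>W. w v * a v) ^ k \<le> (\<Sum>v\<in>W. w v * a v ^ k) / c * c ^ k"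
    using c0 by (simp add: divide_le_eq)
  also have "c ^ k = c * c ^ (k - 1)" using k by (cases k) auto
  also have "(\<Sum>v\<in>W. w v * a v ^ k) / c * (c * c ^ (k - 1)) = (\<Sum>v\<in>W. w v * a v ^ k) * c ^ (k - 1)"
    using c0 by simp
  also have "\<dots> \<le> (\<Sum>v\<in>W. w v * a v ^ k) * 1"
  proof (rule mult_left_mono)
    have "c \<le> 1" using w1 c_def by simp
    thus "c ^ (k - 1) \<le> 1" using c0 by (intro power_le_one) auto
    show "0 \<le> (\<Sum>v\<in>W. w v * a v ^ k)" using w0 a0 by (intro sum_nonneg mult_nonneg_nonneg zero_le_power) auto
  qed
  finally show ?thesis by simp
qed


lemma sum_UN_le:
  fixes f :: "'b \<Rightarrow> real"
  assumes "finite I" "\<And>i. i \<in> I \<Longrightarrow> finite (B i)" "\<And>x. 0 \<le> f x"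
  shows "sum f (\<Union>i\<in>I. B i) \<le> (\<Sum>i\<in>I. sum f (B i))"
  using assms
proof (induction I rule: finite_induct)
  case empty then show ?case by simp
next
  case (insert i I)
  have fin: "finite (\<Union>i\<in>I. B i)" using insert by auto
  have "sum f (\<Union>i\<in>insert i I. B i) = sum f (B i \<union> (\<Union>i\<in>I. B i))" by simp
  also have "\<dots> \<le> sum f (B i) + sum f (\<Union>i\<in>I. B i)"
    using sum.union_inter[of "B i" "\<Union>i\<in>I. B i" f] insert fin sum_nonneg[of "B i \<inter> (\<Union>i\<in>I. B i)" f]
    by auto
  also have "\<dots> \<le> sum f (B i) + (\<Sum>i\<in>I. sum f (B i))" using insert by auto
  finally show ?case using insert by simp
qed


lemma mult_card:
  fixes d M :: nat
  assumes "d > 0"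
  shows "real (card {m\<in>{1..M}. d dvd m}) \<le> real M / real d"
proof -
  have "{m\<in>{1..M}. d dvd m} \<subseteq> (\<lambda>j. d * j) ` {1..M div d}"
  proof
    fix m assume "m \<in> {m\<in>{1..M}. d dvd m}"
    then obtain j where j: "m = d * j" "1 \<le> m" "m \<le> M" by auto
    have "1 \<le> j" using j by (cases j) auto
    moreover have "j \<le> M div d" using j assms
      by (metis div_le_mono nonzero_mult_div_cancel_left not_gr0)
    ultimately show "m \<in> (\<lambda>j. d * j) ` {1..M div d}" using j by auto
  qed
  hence "card {m\<in>{1..M}. d dvd m} \<le> card ((\<lambda>j. d * j) ` {1..M div d})" by (intro card_mono) auto
  also have "\<dots> \<le> M div d" using card_image_le[of "{1..M div d}" "\<lambda>j. d * j"] by simp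
  finally have "real (card {m\<in>{1..M}. d dvd m}) \<le> real (M div d)" by linarith
  also have "\<dots> \<le> real M / real d" by (rule of_nat_div_le_of_nat)
  finally show ?thesis .
qed


lemma h_bound:
  fixes s \<gamma> Z :: real and d :: nat
  assumes d: "d > 0" and s: "1 < s" and g: "\<gamma> \<le> s"
    and sm: "summable (\<lambda>n. real n powr (-s))" and Z: "Z = suminf (\<lambda>n. real n powr (-s))"
  shows "(\<Sum>v\<in>{v. 0 < v \<and> v \<le> d \<and> d dvd v^2}. real v powr (-\<gamma>)) \<le> Z * real d powr (s - \<gamma> - s/2)"
proof -
  obtain r where r: "r > 0" "d \<le> r^2" "\<And>v. d dvd v^2 \<Longrightarrow> r dvd v" using sq_ideal[OF d] by blast
  define E where "E = {v. 0 < v \<and> v \<le> d \<and> d dvd v^2}"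
  have finE: "finite E" unfolding E_def by (rule finite_subset[of _ "{..d}"]) auto
  have sub: "E \<subseteq> (\<lambda>j. r * j) ` {1..d}"
  proof
    fix v assume v: "v \<in> E"
    have "r dvd v" using r(3) v E_def by auto
    then obtain j where j: "v = r * j" by (rule dvdE)
    have "j \<ge> 1" using v j E_def by (cases j) auto
    moreover have "j \<le> v" using j r(1) by simp
    moreover have "j \<le> d" using \<open>j \<le> v\<close> v E_def by auto
    ultimately have "j \<in> {1..d}" by simp
    thus "v \<in> (\<lambda>j. r * j) ` {1..d}" using j by blast
  qed
  have "(\<Sum>v\<in>E. real v powr (-\<gamma>)) \<le> (\<Sum>v\<in>E. real v powr (-s) * real d powr (s - \<gamma>))"
  proof (rule sum_mono)
    fix v assume v: "v \<in> E"
    hence v0: "real v > 0" and vd: "real v \<le> real d" using E_def by auto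
    have "real v powr (-\<gamma>) = real v powr (-s) * real v powr (s - \<gamma>)"
      using v0 by (simp add: powr_add[symmetric])
    also have "\<dots> \<le> real v powr (-s) * real d powr (s - \<gamma>)"
      by (rule mult_left_mono) (use v0 vd g in \<open>auto intro: powr_mono2\<close>)
    finally show "real v powr (-\<gamma>) \<le> real v powr (-s) * real d powr (s - \<gamma>)" .
  qed
  also have "\<dots> = (\<Sum>v\<in>E. real v powr (-s)) * real d powr (s - \<gamma>)" by (simp add: sum_distrib_right)
  finally have step1: "(\<Sum>v\<in>E. real v powr (-\<gamma>)) \<le> (\<Sum>v\<in>E. real v powr (-s)) * real d powr (s - \<gamma>)" .
  have "(\<Sum>v\<in>E. real v powr (-s)) \<le> (\<Sum>v\<in>(\<lambda>j. r * j) ` {1..d}. real v powr (-s))"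
    by (rule sum_mono2[OF _ sub]) auto
  also have "\<dots> = (\<Sum>j\<in>{1..d}. real (r * j) powr (-s))"
    using r(1) by (subst sum.reindex) (auto simp: inj_on_def)
  also have "\<dots> = real r powr (-s) * (\<Sum>j\<in>{1..d}. real j powr (-s))"
    by (simp add: powr_mult sum_distrib_left)
  finally have step2: "(\<Sum>v\<in>E. real v powr (-s)) \<le> real r powr (-s) * (\<Sum>j\<in>{1..d}. real j powr (-s))" .
  have step3: "(\<Sum>j\<in>{1..d}. real j powr (-s)) \<le> Z"
    unfolding Z by (rule sum_le_suminf[OF sm]) auto
  have step4: "real r powr (-s) \<le> real d powr (-s/2)"
  proof -
    have rd: "real d \<le> real r ^ 2" using r(2) by (metis of_nat_le_iff of_nat_power)
    have "real d powr (s/2) \<le> (real r ^ 2) powr (s/2)"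
      by (rule powr_mono2) (use rd s in auto)
    also have "(real r ^ 2) powr (s/2) = real r powr s"
    proof -
      have e: "real r ^ 2 = real r powr 2" using r(1) by (simp add: powr_numeral)
      have "(real r ^ 2) powr (s/2) = real r powr (2 * (s/2))" unfolding e by (rule powr_powr)
      thus ?thesis by simp
    qed
    finally have "real d powr (s/2) \<le> real r powr s" .
    hence "inverse (real r powr s) \<le> inverse (real d powr (s/2))" using d r(1) by (intro le_imp_inverse_le) auto
    thus ?thesis by (simp add: powr_minus)
  qed
  have Z0: "0 \<le> Z" unfolding Z by (rule suminf_nonneg[OF sm]) simp
  have "(\<Sum>v\<in>E. real v powr (-s)) \<le> real d powr (-s/2) * Z"
  proof -
    have "real r powr (-s) * (\<Sum>j\<in>{1..d}. real j powr (-s)) \<le> real d powr (-s/2) * Z"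
      by (rule mult_mono[OF step4 step3]) (auto intro: sum_nonneg)
    thus ?thesis using step2 by linarith
  qed
  hence "(\<Sum>v\<in>E. real v powr (-s)) * real d powr (s - \<gamma>) \<le> real d powr (-s/2) * Z * real d powr (s - \<gamma>)"
    by (rule mult_right_mono) simp
  hence "(\<Sum>v\<in>E. real v powr (-\<gamma>)) \<le> real d powr (-s/2) * Z * real d powr (s - \<gamma>)"
    using step1 by linarith
  also have "real d powr (-s/2) * Z * real d powr (s - \<gamma>) = Z * (real d powr (-s/2) * real d powr (s - \<gamma>))"
    by simp
  also have "real d powr (-s/2) * real d powr (s - \<gamma>) = real d powr (s - \<gamma> - s/2)"
    using d by (simp add: powr_add[symmetric])
  finally show ?thesis unfolding E_def .
qed




lemma card_shift1:
  fixes d X :: nat assumes "d > 0"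
  shows "real (card {n\<in>{3..X}. d dvd n - 2}) \<le> real X / real d"
proof -
  have "{n\<in>{3..X}. d dvd n - 2} \<subseteq> (\<lambda>m. m + 2) ` {m\<in>{1..X}. d dvd m}"
  proof
    fix n assume n: "n \<in> {n\<in>{3..X}. d dvd n - 2}"
    hence "n - 2 \<in> {m\<in>{1..X}. d dvd m}" by auto
    moreover have "n = (n - 2) + 2" using n by auto
    ultimately show "n \<in> (\<lambda>m. m + 2) ` {m\<in>{1..X}. d dvd m}" by blast
  qed
  hence "card {n\<in>{3..X}. d dvd n - 2} \<le> card ((\<lambda>m. m + 2) ` {m\<in>{1..X}. d dvd m})"
    by (intro card_mono) auto
  also have "\<dots> \<le> card {m\<in>{1..X}. d dvd m}" by (rule card_image_le) auto
  finally have "real (card {n\<in>{3..X}. d dvd n - 2}) \<le> real (card {m\<in>{1..X}. d dvd m})" by linarith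
  also have "\<dots> \<le> real X / real d" by (rule mult_card[OF assms])
  finally show ?thesis .
qed

lemma card_shift2:
  fixes d X :: nat assumes "d > 0"
  shows "real (card {n\<in>{3..X}. d dvd n + 2}) \<le> real (X + 2) / real d"
proof -
  have "{n\<in>{3..X}. d dvd n + 2} \<subseteq> (\<lambda>m. m - 2) ` {m\<in>{1..X+2}. d dvd m}"
  proof
    fix n assume n: "n \<in> {n\<in>{3..X}. d dvd n + 2}"
    hence "n + 2 \<in> {m\<in>{1..X+2}. d dvd m}" by auto
    moreover have "n = (n + 2) - 2" by auto
    ultimately show "n \<in> (\<lambda>m. m - 2) ` {m\<in>{1..X+2}. d dvd m}" by blast
  qed
  hence "card {n\<in>{3..X}. d dvd n + 2} \<le> card ((\<lambda>m. m - 2) ` {m\<in>{1..X+2}. d dvd m})"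
    by (intro card_mono) auto
  also have "\<dots> \<le> card {m\<in>{1..X+2}. d dvd m}" by (rule card_image_le) auto
  finally have "real (card {n\<in>{3..X}. d dvd n + 2}) \<le> real (card {m\<in>{1..X+2}. d dvd m})" by linarith
  also have "\<dots> \<le> real (X + 2) / real d" by (rule mult_card[OF assms])
  finally show ?thesis .
qed

lemma count_bound:
  fixes s \<gamma> Z :: real and X :: nat
  assumes s: "1 < s" and g: "\<gamma> \<le> s" and ex: "s - \<gamma> - s/2 - 1 = -s"
    and sm: "summable (\<lambda>n. real n powr (-s))" and Z: "Z = suminf (\<lambda>n. real n powr (-s))"
  shows "(\<Sum>n\<in>{3..X}. \<Sum>v\<in>{v. 0 < v \<and> v^2 dvd (n-2)*(n+2)}. real v powr (-\<gamma>)) \<le> 4 * Z^2 * real X"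
proof (cases "X \<ge> 3")
  case False
  hence "{3..X} = {}" by auto
  moreover have "Z \<ge> 0" unfolding Z by (rule suminf_nonneg[OF sm]) simp
  ultimately show ?thesis by simp
next
  case X3: True
  define E where "E d = {v. 0 < v \<and> v \<le> d \<and> d dvd v^2}" for d :: nat
  define H where "H d = (\<Sum>v\<in>E d. real v powr (-\<gamma>))" for d
  define f where "f v = real v powr (-\<gamma>)" for v :: nat
  have f0: "0 \<le> f v" for v unfolding f_def by simp
  have finE: "finite (E d)" for d unfolding E_def by (rule finite_subset[of _ "{..d}"]) auto
  have H0: "0 \<le> H d" for d unfolding H_def by (rule sum_nonneg) simp
  have Hb: "H d \<le> Z * real d powr (s - \<gamma> - s/2)" if "d > 0" for d
    unfolding H_def E_def by (rule h_bound[OF that s g sm Z])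
  define D1 where "D1 n = {d\<in>{1..X+2}. d dvd n - 2}" for n
  define D2 where "D2 n = {d\<in>{1..X+2}. d dvd n + 2}" for n
  have pern: "(\<Sum>v\<in>{v. 0 < v \<and> v^2 dvd (n-2)*(n+2)}. f v) \<le> (\<Sum>d\<in>D1 n. H d) + (\<Sum>d\<in>D2 n. H d)"
    if n: "n \<in> {3..X}" for n
  proof -
    define U1 where "U1 = (\<Union>d\<in>D1 n. E d)"
    define U2 where "U2 = (\<Union>d\<in>D2 n. E d)"
    have fD: "finite (D1 n)" "finite (D2 n)" unfolding D1_def D2_def by auto
    have fU: "finite U1" "finite U2" unfolding U1_def U2_def using fD finE by auto
    have sub: "{v. 0 < v \<and> v^2 dvd (n-2)*(n+2)} \<subseteq> U1 \<union> U2"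
    proof
      fix v assume "v \<in> {v. 0 < v \<and> v^2 dvd (n-2)*(n+2)}"
      hence v: "0 < v" "v^2 dvd (n-2)*(n+2)" by auto
      obtain d where d: "v \<le> d" "d dvd v^2" "d dvd n - 2 \<or> d dvd n + 2"
        using gcd_trick[of n v] n v by auto
      have d0: "0 < d" using d v by auto
      have vE: "v \<in> E d" unfolding E_def using d v by auto
      show "v \<in> U1 \<union> U2"
      proof (cases "d dvd n - 2")
        case True
        hence "d \<le> n - 2" using n by (intro dvd_imp_le) auto
        hence "d \<in> D1 n" unfolding D1_def using True d0 n by auto
        thus ?thesis using vE U1_def by auto
      next
        case False
        hence dd: "d dvd n + 2" using d by auto
        hence "d \<le> n + 2" by (intro dvd_imp_le) auto
        hence "d \<in> D2 n" unfolding D2_def using dd d0 n by auto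
        thus ?thesis using vE U2_def by auto
      qed
    qed
    have "(\<Sum>v\<in>{v. 0 < v \<and> v^2 dvd (n-2)*(n+2)}. f v) \<le> sum f (U1 \<union> U2)"
      by (rule sum_mono2[OF _ sub]) (use fU f0 in auto)
    also have "\<dots> \<le> sum f U1 + sum f U2"
      using sum.union_inter[OF fU, of f] sum_nonneg[of "U1 \<inter> U2" f] f0 by auto
    also have "sum f U1 \<le> (\<Sum>d\<in>D1 n. H d)"
      unfolding U1_def H_def f_def by (rule sum_UN_le) (use fD finE in auto)
    also have "sum f U2 \<le> (\<Sum>d\<in>D2 n. H d)"
      unfolding U2_def H_def f_def by (rule sum_UN_le) (use fD finE in auto)
    finally show ?thesis by simp
  qed
  have "(\<Sum>n\<in>{3..X}. \<Sum>v\<in>{v. 0 < v \<and> v^2 dvd (n-2)*(n+2)}. real v powr (-\<gamma>))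
      \<le> (\<Sum>n\<in>{3..X}. (\<Sum>d\<in>D1 n. H d) + (\<Sum>d\<in>D2 n. H d))"
    by (rule sum_mono) (use pern in \<open>simp add: f_def\<close>)
  also have "\<dots> = (\<Sum>n\<in>{3..X}. \<Sum>d\<in>D1 n. H d) + (\<Sum>n\<in>{3..X}. \<Sum>d\<in>D2 n. H d)"
    by (simp add: sum.distrib)
  also have "(\<Sum>n\<in>{3..X}. \<Sum>d\<in>D1 n. H d) = (\<Sum>d\<in>{1..X+2}. \<Sum>n\<in>{n\<in>{3..X}. d dvd n - 2}. H d)"
    unfolding D1_def by (rule sum.swap_restrict) auto
  also have "(\<Sum>n\<in>{3..X}. \<Sum>d\<in>D2 n. H d) = (\<Sum>d\<in>{1..X+2}. \<Sum>n\<in>{n\<in>{3..X}. d dvd n + 2}. H d)"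
    unfolding D2_def by (rule sum.swap_restrict) auto
  also have "(\<Sum>d\<in>{1..X+2}. \<Sum>n\<in>{n\<in>{3..X}. d dvd n - 2}. H d)
           + (\<Sum>d\<in>{1..X+2}. \<Sum>n\<in>{n\<in>{3..X}. d dvd n + 2}. H d)
           = (\<Sum>d\<in>{1..X+2}. (real (card {n\<in>{3..X}. d dvd n - 2}) + real (card {n\<in>{3..X}. d dvd n + 2})) * H d)"
    by (simp add: sum.distrib[symmetric] algebra_simps)
  also have "\<dots> \<le> (\<Sum>d\<in>{1..X+2}. (4 * real X * Z) * real d powr (-s))"
  proof (rule sum_mono)
    fix d assume "d \<in> {1..X+2}"
    hence d0: "d > 0" by simp
    have c: "real (card {n\<in>{3..X}. d dvd n - 2}) + real (card {n\<in>{3..X}. d dvd n + 2}) \<le> 4 * real X / real d"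
    proof -
      have "real (card {n\<in>{3..X}. d dvd n - 2}) + real (card {n\<in>{3..X}. d dvd n + 2})
            \<le> real X / real d + real (X+2) / real d"
        using card_shift1[OF d0, of X] card_shift2[OF d0, of X] by linarith
      also have "\<dots> = (2 * real X + 2) / real d" by (simp add: add_divide_distrib[symmetric])
      also have "\<dots> \<le> 4 * real X / real d" using X3 d0 by (intro divide_right_mono) auto
      finally show ?thesis .
    qed
    have "(real (card {n\<in>{3..X}. d dvd n - 2}) + real (card {n\<in>{3..X}. d dvd n + 2})) * H d
        \<le> (4 * real X / real d) * (Z * real d powr (s - \<gamma> - s/2))"
      by (rule mult_mono[OF c Hb[OF d0]]) (use H0 X3 in auto)
    also have "\<dots> = 4 * real X * Z * (real d powr (s - \<gamma> - s/2) / real d)" by simp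
    also have "real d powr (s - \<gamma> - s/2) / real d = real d powr (s - \<gamma> - s/2 - 1)"
      using d0 by (simp add: powr_diff)
    also have "\<dots> = real d powr (-s)" using ex by simp
    finally show "(real (card {n\<in>{3..X}. d dvd n - 2}) + real (card {n\<in>{3..X}. d dvd n + 2})) * H d
        \<le> (4 * real X * Z) * real d powr (-s)" .
  qed
  also have "\<dots> = (4 * real X * Z) * (\<Sum>d\<in>{1..X+2}. real d powr (-s))" by (rule sum_distrib_left[symmetric])
  also have "\<dots> \<le> (4 * real X * Z) * Z"
  proof (rule mult_left_mono)
    show "(\<Sum>d\<in>{1..X+2}. real d powr (-s)) \<le> Z" unfolding Z by (rule sum_le_suminf[OF sm]) auto
    have "Z \<ge> 0" unfolding Z by (rule suminf_nonneg[OF sm]) simp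
    thus "0 \<le> 4 * real X * Z" by simp
  qed
  also have "\<dots> = 4 * Z^2 * real X" by (simp add: power2_eq_square)
  finally show ?thesis .
qed



lemma delta_bound:
  fixes N P :: real and n :: nat
  assumes N: "N \<ge> 1" and n: "n > 2"
  shows "\<bar>Delta23 P N n\<bar> \<le> (N powr (-1/2) + infsum (\<lambda>l::nat. 1 / real l) {l. real l > sqrt N \<and> smooth P l})
            * (\<Sum>v\<in>{v. 0 < v \<and> v^2 dvd (n-2)*(n+2)}. 1 / real v)"
proof -
  define A where "A = N powr (-1/2) + infsum (\<lambda>l::nat. 1 / real l) {l. real l > sqrt N \<and> smooth P l}"
  define V where "V = {v::nat. 0 < v \<and> int (v^2) dvd (int n^2 - 4) \<and> smooth P v
                    \<and> is_disc ((int n^2 - 4) div int (v^2))}"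
  define W where "W = {v. 0 < v \<and> v^2 dvd (n-2)*(n+2)}"
  define I where "I v = infsum (\<lambda>l::nat. real_of_int (chi ((int n^2 - 4) div int (v^2)) l) / real l
                          * (exp (- real l / N) - 1)) {l. 0 < l \<and> smooth P l}" for v :: nat
  have VW: "V \<subseteq> W" unfolding V_def W_def using W_cond[OF n] by auto
  have m0: "(n-2)*(n+2) > 0" using n by auto
  have finW: "finite W"
  proof (rule finite_subset[of _ "{..(n-2)*(n+2)}"])
    show "W \<subseteq> {..(n-2)*(n+2)}"
    proof
      fix v assume "v \<in> W"
      hence v: "0 < v" "v^2 dvd (n-2)*(n+2)" unfolding W_def by auto
      have "v \<le> v^2" by (simp add: power2_eq_square)
      also have "v^2 \<le> (n-2)*(n+2)" using v m0 by (intro dvd_imp_le) auto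
      finally show "v \<in> {..(n-2)*(n+2)}" by simp
    qed
  qed simp
  have IA: "\<bar>I v\<bar> \<le> A" for v unfolding I_def A_def by (rule inner_bound[OF N])
  have "Delta23 P N n = (\<Sum>v\<in>V. (1 / real v) * I v)" unfolding Delta23_def V_def I_def ..
  hence "\<bar>Delta23 P N n\<bar> \<le> (\<Sum>v\<in>V. \<bar>(1 / real v) * I v\<bar>)" by (simp only: sum_abs)
  also have "\<dots> \<le> (\<Sum>v\<in>V. (1 / real v) * A)"
    by (rule sum_mono) (simp add: abs_mult IA divide_right_mono)
  also have "\<dots> \<le> (\<Sum>v\<in>W. (1 / real v) * A)"
  proof (rule sum_mono2[OF finW VW])
    have "A \<ge> 0" using IA[of 0] by linarith
    thus "\<And>b. b \<in> W - V \<Longrightarrow> 0 \<le> 1 / real b * A" by simp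
  qed
  also have "\<dots> = A * (\<Sum>v\<in>W. 1 / real v)" by (simp add: sum_distrib_left mult.commute)
  finally show ?thesis unfolding A_def W_def .
qed

lemma F_pow_bound:
  fixes s \<gamma> Z :: real and k n :: nat
  assumes k: "even k" "k \<ge> 1" and s: "1 < s" and gam: "\<gamma> = s - real k * (s - 1)"
    and sm: "summable (\<lambda>n. real n powr (-s))" and Z: "Z = suminf (\<lambda>n. real n powr (-s))"
    and fin: "finite W" and W0: "\<And>v. v \<in> W \<Longrightarrow> v > 0"
  shows "(\<Sum>v\<in>W. 1 / real v) ^ k \<le> Z ^ (k - 1) * (\<Sum>v\<in>W. real v powr (-\<gamma>))"
proof (cases "W = {}")
  case True thus ?thesis using k by (simp add: zero_power)
next
  case False
  have Z1: "Z \<ge> 1"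
  proof -
    have "(\<Sum>n\<in>{1}. real n powr (-s)) \<le> Z" unfolding Z by (rule sum_le_suminf[OF sm]) auto
    thus ?thesis by simp
  qed
  define w where "w v = real v powr (-s) / Z" for v :: nat
  define a where "a v = Z * real v powr (s - 1)" for v :: nat
  have "(\<Sum>v\<in>W. w v * a v) ^ k \<le> (\<Sum>v\<in>W. w v * a v ^ k)"
  proof (rule jensen_pow[OF fin _ _ _ k])
    show "0 \<le> w v" for v unfolding w_def using Z1 by simp
    show "0 \<le> a v" for v unfolding a_def using Z1 by simp
    have "(\<Sum>v\<in>W. real v powr (-s)) \<le> Z" unfolding Z by (rule sum_le_suminf[OF sm fin]) auto
    thus "sum w W \<le> 1" unfolding w_def using Z1 by (simp add: sum_divide_distrib[symmetric])
  qed
  also have "(\<Sum>v\<in>W. w v * a v) = (\<Sum>v\<in>W. 1 / real v)"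
  proof (rule sum.cong[OF refl])
    fix v assume "v \<in> W"
    hence v0: "real v > 0" using W0 by auto
    have "w v * a v = real v powr (-s) * real v powr (s - 1)" unfolding w_def a_def using Z1 by simp
    also have "\<dots> = real v powr (-1)" using v0 by (simp add: powr_add[symmetric])
    also have "\<dots> = 1 / real v" using v0 by (simp add: powr_minus_divide)
    finally show "w v * a v = 1 / real v" .
  qed
  also have "(\<Sum>v\<in>W. w v * a v ^ k) = (\<Sum>v\<in>W. Z ^ (k - 1) * real v powr (-\<gamma>))"
  proof (rule sum.cong[OF refl])
    fix v assume "v \<in> W"
    hence v0: "real v > 0" using W0 by auto
    have "a v ^ k = Z ^ k * real v powr ((s - 1) * real k)"
      unfolding a_def using v0 by (simp add: power_mult_distrib powr_realpow[symmetric] powr_powr)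
    hence "w v * a v ^ k = (Z ^ k / Z) * (real v powr (-s) * real v powr ((s - 1) * real k))"
      unfolding w_def by simp
    also have "Z ^ k / Z = Z ^ (k - 1)" using Z1 k by (simp add: power_diff)
    also have "real v powr (-s) * real v powr ((s - 1) * real k) = real v powr (-\<gamma>)"
      using v0 by (simp add: powr_add[symmetric] gam algebra_simps)
    finally show "w v * a v ^ k = Z ^ (k - 1) * real v powr (-\<gamma>)" .
  qed
  also have "\<dots> = Z ^ (k - 1) * (\<Sum>v\<in>W. real v powr (-\<gamma>))" by (simp add: sum_distrib_left)
  finally show ?thesis .
qed



theorem lemma3p3:
  fixes q :: nat
  assumes "q > 1"
  shows "\<exists>C>0. \<forall>P x N :: real. P \<ge> 2 \<longrightarrow> x \<ge> 1 \<longrightarrow> N \<ge> 1 \<longrightarrow>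
     ((1 / x) * (\<Sum>n\<in>{n::nat. 2 < n \<and> real n \<le> x}. \<bar>Delta23 P N n\<bar> ^ (2 * q)))
        powr (1 / real (2 * q))
     \<le> C * (N powr (-1/2) + infsum (\<lambda>l::nat. 1 / real l) {l. real l > sqrt N \<and> smooth P l})"
proof -
  define k where "k = 2 * q"
  have k: "even k" "k \<ge> 1" using assms unfolding k_def by auto
  define \<epsilon> :: real where "\<epsilon> = 1 / (2 * real k + 1)"
  define s where "s = 1 + \<epsilon>"
  define \<gamma> where "\<gamma> = s - real k * (s - 1)"
  have eps0: "\<epsilon> > 0" unfolding \<epsilon>_def by simp
  have s1: "1 < s" unfolding s_def using eps0 by simp
  have gs: "\<gamma> \<le> s" unfolding \<gamma>_def using s1 by simp
  have ex: "s - \<gamma> - s/2 - 1 = -s"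
  proof -
    have "\<epsilon> * (2 * real k + 1) = 1" unfolding \<epsilon>_def by simp
    hence "2 * (\<epsilon> * real k) + \<epsilon> = 1" by (simp add: algebra_simps)
    moreover have "s - \<gamma> - s/2 - 1 + s = \<epsilon> * real k + \<epsilon> / 2 - 1/2"
      unfolding \<gamma>_def s_def by (simp add: algebra_simps add_divide_distrib)
    ultimately show ?thesis by linarith
  qed
  have sm: "summable (\<lambda>n. real n powr (-s))" using s1 by (subst summable_real_powr_iff) simp
  define Z where "Z = suminf (\<lambda>n. real n powr (-s))"
  have Z1: "Z \<ge> 1"
  proof -
    have "(\<Sum>n\<in>{1}. real n powr (-s)) \<le> Z" unfolding Z_def by (rule sum_le_suminf[OF sm]) auto
    thus ?thesis by simp
  qed
  define K where "K = 4 * Z ^ (k + 1)"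
  have K0: "K > 0" unfolding K_def using Z1 by simp
  define C where "C = K powr (1 / real k)"
  have C0: "C > 0" unfolding C_def using K0 by simp
  show ?thesis
  proof (intro exI[of _ C] conjI C0 allI impI)
    fix P x N :: real
    assume P: "P \<ge> 2" and x: "x \<ge> 1" and N: "N \<ge> 1"
    define A where "A = N powr (-1/2) + infsum (\<lambda>l::nat. 1 / real l) {l. real l > sqrt N \<and> smooth P l}"
    have A0: "A > 0"
    proof -
      have "infsum (\<lambda>l::nat. 1 / real l) {l. real l > sqrt N \<and> smooth P l} \<ge> 0"
        by (rule infsum_nonneg) simp
      moreover have "N powr (-1/2) > 0" using N by simp
      ultimately show ?thesis unfolding A_def by linarith
    qed
    define X where "X = nat \<lfloor>x\<rfloor>"
    have fl: "\<lfloor>x\<rfloor> \<ge> 0" using x by simp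
    have iffX: "real n \<le> x \<longleftrightarrow> n \<le> X" for n :: nat
    proof -
      have "n \<le> X \<longleftrightarrow> int n \<le> \<lfloor>x\<rfloor>" unfolding X_def by (rule le_nat_iff[OF fl])
      also have "\<dots> \<longleftrightarrow> real_of_int (int n) \<le> x" by (rule le_floor_iff)
      also have "real_of_int (int n) = real n" by (rule of_int_of_nat_eq)
      finally show ?thesis by (rule sym)
    qed
    have seteq: "{n::nat. 2 < n \<and> real n \<le> x} = {3..X}"
    proof -
      have "n \<in> {n::nat. 2 < n \<and> real n \<le> x} \<longleftrightarrow> n \<in> {3..X}" for n :: nat
        unfolding mem_Collect_eq atLeastAtMost_iff iffX by (rule iffI) auto
      thus ?thesis by blast
    qed
    have Xx: "real X \<le> x"
    proof -
      have "real X = real_of_int \<lfloor>x\<rfloor>" unfolding X_def using fl by (rule of_nat_nat)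
      also have "\<dots> \<le> x" by (rule of_int_floor_le)
      finally show ?thesis .
    qed
    define W where "W n = {v. 0 < v \<and> v^2 dvd (n-2)*(n+2)}" for n :: nat
    have finW: "finite (W n)" if "n > 2" for n
    proof (rule finite_subset[of _ "{..(n-2)*(n+2)}"])
      have m0: "(n-2)*(n+2) > 0" using that by auto
      show "W n \<subseteq> {..(n-2)*(n+2)}"
      proof
        fix v assume "v \<in> W n"
        hence v: "0 < v" "v^2 dvd (n-2)*(n+2)" unfolding W_def by auto
        have "v \<le> v^2" by (simp add: power2_eq_square)
        also have "v^2 \<le> (n-2)*(n+2)" using v m0 by (intro dvd_imp_le) auto
        finally show "v \<in> {..(n-2)*(n+2)}" by simp
      qed
    qed simp
    have "(\<Sum>n\<in>{3..X}. \<bar>Delta23 P N n\<bar> ^ k) \<le> (\<Sum>n\<in>{3..X}. (A * (\<Sum>v\<in>W n. 1 / real v)) ^ k)"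
    proof (rule sum_mono)
      fix n assume "n \<in> {3..X}"
      hence n: "n > 2" by auto
      show "\<bar>Delta23 P N n\<bar> ^ k \<le> (A * (\<Sum>v\<in>W n. 1 / real v)) ^ k"
        by (rule power_mono) (use delta_bound[OF N n, of P] in \<open>auto simp: A_def W_def\<close>)
    qed
    also have "\<dots> = A ^ k * (\<Sum>n\<in>{3..X}. (\<Sum>v\<in>W n. 1 / real v) ^ k)"
      by (simp only: power_mult_distrib sum_distrib_left[symmetric])
    finally have S1: "(\<Sum>n\<in>{3..X}. \<bar>Delta23 P N n\<bar> ^ k) \<le> A ^ k * (\<Sum>n\<in>{3..X}. (\<Sum>v\<in>W n. 1 / real v) ^ k)" .
    have "(\<Sum>n\<in>{3..X}. (\<Sum>v\<in>W n. 1 / real v) ^ k) \<le> (\<Sum>n\<in>{3..X}. Z ^ (k - 1) * (\<Sum>v\<in>W n. real v powr (-\<gamma>)))"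
    proof (rule sum_mono)
      fix n assume "n \<in> {3..X}"
      hence n: "n > 2" by auto
      show "(\<Sum>v\<in>W n. 1 / real v) ^ k \<le> Z ^ (k - 1) * (\<Sum>v\<in>W n. real v powr (-\<gamma>))"
        by (rule F_pow_bound[OF k s1 \<gamma>_def sm Z_def finW[OF n]]) (simp add: W_def)
    qed
    also have "\<dots> = Z ^ (k - 1) * (\<Sum>n\<in>{3..X}. \<Sum>v\<in>W n. real v powr (-\<gamma>))"
      by (simp add: sum_distrib_left)
    finally have S2: "(\<Sum>n\<in>{3..X}. (\<Sum>v\<in>W n. 1 / real v) ^ k) \<le> Z ^ (k - 1) * (\<Sum>n\<in>{3..X}. \<Sum>v\<in>W n. real v powr (-\<gamma>))" .
    have S3: "(\<Sum>n\<in>{3..X}. \<Sum>v\<in>W n. real v powr (-\<gamma>)) \<le> 4 * Z^2 * real X"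
      unfolding W_def by (rule count_bound[OF s1 gs ex sm Z_def])
    have Zk: "Z ^ (k - 1) * (4 * Z^2 * real X) = K * real X"
    proof -
      have "Z ^ (k - 1) * Z^2 = Z ^ (k + 1)" using k by (simp add: power_add[symmetric])
      thus ?thesis unfolding K_def by (simp add: algebra_simps)
    qed
    have Zk0: "Z ^ (k - 1) \<ge> 0" using Z1 by simp
    have Ak0: "A ^ k \<ge> 0" using A0 by simp
    have "Z ^ (k - 1) * (\<Sum>n\<in>{3..X}. \<Sum>v\<in>W n. real v powr (-\<gamma>)) \<le> Z ^ (k - 1) * (4 * Z^2 * real X)"
      by (rule mult_left_mono[OF S3 Zk0])
    hence "(\<Sum>n\<in>{3..X}. (\<Sum>v\<in>W n. 1 / real v) ^ k) \<le> K * real X" using S2 Zk by linarith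
    hence "A ^ k * (\<Sum>n\<in>{3..X}. (\<Sum>v\<in>W n. 1 / real v) ^ k) \<le> A ^ k * (K * real X)"
      by (rule mult_left_mono[OF _ Ak0])
    hence S: "(\<Sum>n\<in>{3..X}. \<bar>Delta23 P N n\<bar> ^ k) \<le> A ^ k * K * real X" using S1 by (simp add: mult.assoc)
    have AKx: "A ^ k * K * real X \<le> A ^ k * K * x"
      by (rule mult_left_mono[OF Xx]) (use Ak0 K0 in simp)
    have "(1 / x) * (\<Sum>n\<in>{3..X}. \<bar>Delta23 P N n\<bar> ^ k) \<le> (1 / x) * (A ^ k * K * x)"
      by (rule mult_left_mono) (use S AKx x in auto)
    also have "\<dots> = A ^ k * K" using x by simp
    finally have L: "(1 / x) * (\<Sum>n\<in>{3..X}. \<bar>Delta23 P N n\<bar> ^ k) \<le> A ^ k * K" .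
    have L0: "0 \<le> (1 / x) * (\<Sum>n\<in>{3..X}. \<bar>Delta23 P N n\<bar> ^ k)" using x by (simp add: sum_nonneg)
    have "((1 / x) * (\<Sum>n\<in>{3..X}. \<bar>Delta23 P N n\<bar> ^ k)) powr (1 / real k) \<le> (A ^ k * K) powr (1 / real k)"
      by (rule powr_mono2) (use L L0 in auto)
    also have "\<dots> = (A ^ k) powr (1 / real k) * C" unfolding C_def using A0 K0 by (simp add: powr_mult)
    also have "(A ^ k) powr (1 / real k) = A"
    proof -
      have e: "A ^ k = A powr real k" using A0 by (rule powr_realpow[symmetric])
      have "(A ^ k) powr (1 / real k) = A powr (real k * (1 / real k))" unfolding e by (rule powr_powr)
      also have "real k * (1 / real k) = 1" using k by simp
      finally show ?thesis using A0 by simp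
    qed
    finally show "((1 / x) * (\<Sum>n\<in>{n::nat. 2 < n \<and> real n \<le> x}. \<bar>Delta23 P N n\<bar> ^ (2 * q)))
        powr (1 / real (2 * q)) \<le> C * (N powr (-1/2) + infsum (\<lambda>l::nat. 1 / real l) {l. real l > sqrt N \<and> smooth P l})"
      unfolding seteq k_def[symmetric] A_def[symmetric] by (simp add: mult.commute)
  qed
qed


end
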